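(* Let $k,t\ge1$ be integers, let $\mathcal L$ be a finite language of relation and/or constant symbols whose maximal relation arity is $r\ge2$, and let $\mathcal M$ be a totally $k$-bounded $\mathcal L$-structure containing an infinite component. Then there are an integer $t'$ with $t\le t'\le tr$ and a substructure $\mathcal M'$ of $\mathcal M$ such that $\mathcal M'$ has infinitely many distinct components of size $t'$.
   Context: An $\mathcal L$-structure $\mathcal M$ is totally $k$-bounded if for every relation symbol $R(x_1,\dots,x_s)$ of $\mathcal L$ and every partition $[s]=I\cup J$ into nonempty sets, for every assignment of the variables $\bar x_I$ in $M$ there are fewer than $k$ assignments of $\bar x_J$ with $\mathcal M\models R(x_1,\dots,x_s)$. Paths and components: a path from $a$ to $b$ is a finite sequence of tuples $\bar a_1,\dots,\bar a_m$ from $M$, each $\bar a_i$ in the interpretation of some relation symbol, consecutive tuples sharing an element, with $a$ in $\bar a_1$ and $b$ in $\bar a_m$; $A\subseteq M$ is connected if any two distinct elements of $A$ are joined by a path using only elements of $A$; a component is a nonempty connected set closed under paths. Substructures contain the interpretations of all constants. *)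

theory Defs
  imports Main
begin

definition is_structure ::
  "'a set \<Rightarrow> 'r set \<Rightarrow> ('r \<Rightarrow> nat) \<Rightarrow> ('r \<Rightarrow> 'a list set) \<Rightarrow> 'c set \<Rightarrow> ('c \<Rightarrow> 'a) \<Rightarrow> bool" where
  "is_structure M Rs ar Rel Cs cst \<longleftrightarrow>
     (\<forall>R\<in>Rs. \<forall>xs\<in>Rel R. length xs = ar R \<and> set xs \<subseteq> M) \<and> cst ` Cs \<subseteq> M"

definition totally_bounded ::
  "nat \<Rightarrow> 'a set \<Rightarrow> 'r set \<Rightarrow> ('r \<Rightarrow> nat) \<Rightarrow> ('r \<Rightarrow> 'a list set) \<Rightarrow> bool" where
  "totally_bounded k M Rs ar Rel \<longleftrightarrow>
     (\<forall>R\<in>Rs. \<forall>I J. I \<union> J = {..<ar R} \<and> I \<inter> J = {} \<and> I \<noteq> {} \<and> J \<noteq> {} \<longrightarrow>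
        (\<forall>a::nat \<Rightarrow> 'a. (\<forall>i\<in>I. a i \<in> M) \<longrightarrow>
           finite {ys \<in> Rel R. \<forall>i\<in>I. ys ! i = a i} \<and>
           card {ys \<in> Rel R. \<forall>i\<in>I. ys ! i = a i} < k))"

definition tuples :: "'r set \<Rightarrow> ('r \<Rightarrow> 'a list set) \<Rightarrow> 'a list set" where
  "tuples Rs Rel = (\<Union>R\<in>Rs. Rel R)"

definition is_path ::
  "'r set \<Rightarrow> ('r \<Rightarrow> 'a list set) \<Rightarrow> 'a list list \<Rightarrow> 'a \<Rightarrow> 'a \<Rightarrow> bool" where
  "is_path Rs Rel ps a b \<longleftrightarrow>
     ps \<noteq> [] \<and> (\<forall>p\<in>set ps. p \<in> tuples Rs Rel) \<and>
     (\<forall>i. Suc i < length ps \<longrightarrow> set (ps ! i) \<inter> set (ps ! Suc i) \<noteq> {}) \<and>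
     a \<in> set (hd ps) \<and> b \<in> set (last ps)"

definition connected_set :: "'r set \<Rightarrow> ('r \<Rightarrow> 'a list set) \<Rightarrow> 'a set \<Rightarrow> bool" where
  "connected_set Rs Rel A \<longleftrightarrow>
     (\<forall>a\<in>A. \<forall>b\<in>A. a \<noteq> b \<longrightarrow>
        (\<exists>ps. is_path Rs Rel ps a b \<and> (\<forall>p\<in>set ps. set p \<subseteq> A)))"

definition component ::
  "'a set \<Rightarrow> 'r set \<Rightarrow> ('r \<Rightarrow> 'a list set) \<Rightarrow> 'a set \<Rightarrow> bool" where
  "component M Rs Rel C \<longleftrightarrow>
     C \<noteq> {} \<and> C \<subseteq> M \<and> connected_set Rs Rel C \<and>
     (\<forall>a\<in>C. \<forall>b ps. is_path Rs Rel ps a b \<longrightarrow> b \<in> C)"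

text \<open>Induced substructure on A: relations restricted to tuples from A.\<close>
definition restrict_rel :: "('r \<Rightarrow> 'a list set) \<Rightarrow> 'a set \<Rightarrow> 'r \<Rightarrow> 'a list set" where
  "restrict_rel Rel A R = {xs \<in> Rel R. set xs \<subseteq> A}"

end

theory Submission
  imports Defs
begin

lemma path_single: "p \<in> tuples Rs Rel \<Longrightarrow> a \<in> set p \<Longrightarrow> b \<in> set p \<Longrightarrow> is_path Rs Rel [p] a b"
  unfolding is_path_def by auto

lemma path_tl:
  assumes "is_path Rs Rel (p#ps) a b" "ps \<noteq> []" "x \<in> set (hd ps)"
  shows "is_path Rs Rel ps x b"
proof -
  have "\<forall>i. Suc i < length ps \<longrightarrow> set (ps ! i) \<inter> set (ps ! Suc i) \<noteq> {}"
  proof (intro allI impI)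
    fix i assume "Suc i < length ps"
    with assms(1) have "set ((p#ps) ! Suc i) \<inter> set ((p#ps) ! Suc (Suc i)) \<noteq> {}"
      unfolding is_path_def by (metis length_Cons Suc_less_eq)
    thus "set (ps ! i) \<inter> set (ps ! Suc i) \<noteq> {}" by simp
  qed
  thus ?thesis using assms unfolding is_path_def by auto
qed

lemma path_exit:
  "is_path Rs Rel ps a b \<Longrightarrow> a \<in> S \<Longrightarrow> b \<notin> S \<Longrightarrow> \<exists>p\<in>set ps. set p \<inter> S \<noteq> {} \<and> \<not> set p \<subseteq> S"
proof (induction ps arbitrary: a)
  case Nil thus ?case by (simp add: is_path_def)
next
  case (Cons p ps)
  show ?case
  proof (cases "set p \<subseteq> S")
    case True
    have "ps \<noteq> []" using Cons True by (auto simp: is_path_def)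
    then have "set p \<inter> set (hd ps) \<noteq> {}" using Cons.prems(1) unfolding is_path_def
      by (metis hd_conv_nth length_Cons length_greater_0_conv nth_Cons_0 nth_Cons_Suc Suc_less_eq)
    then obtain x where x: "x \<in> set p" "x \<in> set (hd ps)" by auto
    have "is_path Rs Rel ps x b" using path_tl[OF Cons.prems(1) \<open>ps\<noteq>[]\<close> x(2)] .
    from Cons.IH[OF this] x True Cons.prems show ?thesis by auto
  next
    case False
    have "a \<in> set p" using Cons.prems by (simp add: is_path_def)
    with False Cons.prems show ?thesis by auto
  qed
qed

lemma path_app:
  assumes "is_path Rs Rel ps a x" "is_path Rs Rel qs x b"
  shows "is_path Rs Rel (ps @ qs) a b"
proof -
  have "\<forall>i. Suc i < length (ps@qs) \<longrightarrow> set ((ps@qs) ! i) \<inter> set ((ps@qs) ! Suc i) \<noteq> {}"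
  proof (intro allI impI)
    fix i assume i: "Suc i < length (ps@qs)"
    consider "Suc i < length ps" | "Suc i = length ps" | "Suc i > length ps" by linarith
    thus "set ((ps@qs) ! i) \<inter> set ((ps@qs) ! Suc i) \<noteq> {}"
    proof cases
      case 1 thus ?thesis using assms(1) by (simp add: is_path_def nth_append)
    next
      case 2
      have "ps \<noteq> []" "qs \<noteq> []" using assms by (auto simp: is_path_def)
      have "(ps@qs) ! i = last ps" using 2 \<open>ps \<noteq> []\<close> by (metis diff_Suc_1 last_conv_nth lessI nth_append)
      moreover have "(ps@qs) ! Suc i = hd qs" using 2 \<open>qs \<noteq> []\<close> by (simp add: nth_append hd_conv_nth)
      ultimately show ?thesis using assms by (auto simp: is_path_def)
    next
      case 3
      then obtain j where j: "i = length ps + j" by (metis less_imp_Suc_add add_Suc_right Suc_inject)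
      have "Suc j < length qs" using i j by simp
      thus ?thesis using assms(2) j by (simp add: is_path_def nth_append)
    qed
  qed
  thus ?thesis using assms by (auto simp: is_path_def)
qed

lemma path_rev:
  assumes "is_path Rs Rel ps a b" shows "is_path Rs Rel (rev ps) b a"
proof -
  have "\<forall>i. Suc i < length (rev ps) \<longrightarrow> set (rev ps ! i) \<inter> set (rev ps ! Suc i) \<noteq> {}"
  proof (intro allI impI)
    fix i assume i: "Suc i < length (rev ps)"
    let ?j = "length ps - Suc (Suc i)"
    have "Suc ?j < length ps" using i by simp
    hence "set (ps ! ?j) \<inter> set (ps ! Suc ?j) \<noteq> {}" using assms by (simp add: is_path_def)
    moreover have "rev ps ! i = ps ! Suc ?j" using i by (simp add: rev_nth Suc_diff_Suc)
    moreover have "rev ps ! Suc i = ps ! ?j" using i by (simp add: rev_nth)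
    ultimately show "set (rev ps ! i) \<inter> set (rev ps ! Suc i) \<noteq> {}" by auto
  qed
  thus ?thesis using assms by (auto simp: is_path_def hd_rev last_rev)
qed

lemma path_closed:
  "is_path Rs Rel ps a b \<Longrightarrow> a \<in> S \<Longrightarrow> (\<forall>p\<in>tuples Rs Rel. set p \<inter> S \<noteq> {} \<longrightarrow> set p \<subseteq> S) \<Longrightarrow> b \<in> S"
  using path_exit[of Rs Rel ps a b S] by (fastforce simp: is_path_def)

lemma tuples_restrict: "tuples Rs (restrict_rel Rel A) = {p \<in> tuples Rs Rel. set p \<subseteq> A}"
  by (auto simp: tuples_def restrict_rel_def)

lemma path_restrict:
  "is_path Rs Rel ps a b \<Longrightarrow> \<forall>p\<in>set ps. set p \<subseteq> A \<Longrightarrow> is_path Rs (restrict_rel Rel A) ps a b"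
  by (simp add: is_path_def tuples_restrict)


definition adjR :: "'r set \<Rightarrow> ('r \<Rightarrow> 'a list set) \<Rightarrow> ('a \<times> 'a) set" where
  "adjR Rs Rel = {(x,y). x = y \<or> (\<exists>p\<in>tuples Rs Rel. x \<in> set p \<and> y \<in> set p)}"

lemma adjR_sym: "sym (adjR Rs Rel)"
  unfolding adjR_def sym_def by auto

lemma adjR_refl: "(x,x) \<in> adjR Rs Rel"
  unfolding adjR_def by auto

lemma loc_fin:
  assumes "is_structure M Rs ar Rel Cs cst" "totally_bounded k M Rs ar Rel" "finite Rs"
  shows "finite {p \<in> tuples Rs Rel. x \<in> set p}"
proof (cases "x \<in> M")
  case False
  have "{p \<in> tuples Rs Rel. x \<in> set p} = {}"
    using assms(1) False unfolding is_structure_def tuples_def by blast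
  thus ?thesis by (simp only: finite.emptyI)
next
  case True
  have sub: "{p \<in> tuples Rs Rel. x \<in> set p} \<subseteq> (\<Union>R\<in>Rs. \<Union>i\<in>{..<ar R}. {p \<in> Rel R. p ! i = x})"
  proof
    fix p assume "p \<in> {p \<in> tuples Rs Rel. x \<in> set p}"
    then obtain R where R: "R \<in> Rs" "p \<in> Rel R" "x \<in> set p" unfolding tuples_def by auto
    then have "length p = ar R" using assms(1) unfolding is_structure_def by auto
    with R obtain i where "i < ar R" "p ! i = x" by (metis in_set_conv_nth)
    with R show "p \<in> (\<Union>R\<in>Rs. \<Union>i\<in>{..<ar R}. {p \<in> Rel R. p ! i = x})" by auto
  qed
  have "finite {p \<in> Rel R. p ! i = x}" if "R \<in> Rs" "i < ar R" for R i
  proof (cases "ar R = 1")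
    case True
    have "{p \<in> Rel R. p ! i = x} \<subseteq> {[x]}"
    proof
      fix p assume p: "p \<in> {p \<in> Rel R. p ! i = x}"
      then have "length p = 1" using assms(1) that True unfolding is_structure_def by auto
      moreover have "i = 0" using that True by simp
      ultimately show "p \<in> {[x]}" using p
        by (cases p) auto
    qed
    thus ?thesis using finite_subset by blast
  next
    case False
    have I: "{i} \<union> ({..<ar R} - {i}) = {..<ar R}" "{i} \<inter> ({..<ar R} - {i}) = {}" "{i} \<noteq> {}"
      using that by auto
    have "{..<ar R} - {i} \<noteq> {}"
    proof -
      have "ar R \<ge> 2" using False that by linarith
      hence "(if i = 0 then 1 else 0) \<in> {..<ar R} - {i}" by auto
      thus ?thesis by blast
    qed
    note Jne = this
    have H: "\<forall>I J. I \<union> J = {..<ar R} \<and> I \<inter> J = {} \<and> I \<noteq> {} \<and> J \<noteq> {} \<longrightarrow>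
        (\<forall>a::nat \<Rightarrow> 'a. (\<forall>i\<in>I. a i \<in> M) \<longrightarrow>
           finite {ys \<in> Rel R. \<forall>i\<in>I. ys ! i = a i} \<and>
           card {ys \<in> Rel R. \<forall>i\<in>I. ys ! i = a i} < k)"
      using assms(2) that(1) unfolding totally_bounded_def by (rule bspec)
    have H2: "\<forall>a::nat \<Rightarrow> 'a. (\<forall>j\<in>{i}. a j \<in> M) \<longrightarrow>
           finite {ys \<in> Rel R. \<forall>j\<in>{i}. ys ! j = a j} \<and>
           card {ys \<in> Rel R. \<forall>j\<in>{i}. ys ! j = a j} < k"
      using H[THEN spec[of _ "{i}"], THEN spec[of _ "{..<ar R} - {i}"]] I Jne by blast
    have "finite {ys \<in> Rel R. \<forall>j\<in>{i}. ys ! j = (\<lambda>_. x) j}"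
      using H2[THEN spec[of _ "\<lambda>_. x"]] True by simp
    thus ?thesis by simp
  qed
  hence "finite (\<Union>R\<in>Rs. \<Union>i\<in>{..<ar R}. {p \<in> Rel R. p ! i = x})" using assms(3) by auto
  thus ?thesis using sub finite_subset by blast
qed

lemma adj_img_fin:
  assumes "\<And>x. finite {p \<in> tuples Rs Rel. x \<in> set p}" "finite X"
  shows "finite (adjR Rs Rel `` X)"
proof -
  have "adjR Rs Rel `` X \<subseteq> X \<union> (\<Union>x\<in>X. \<Union>p\<in>{p \<in> tuples Rs Rel. x \<in> set p}. set p)"
    unfolding adjR_def by auto
  moreover have "finite (X \<union> (\<Union>x\<in>X. \<Union>p\<in>{p \<in> tuples Rs Rel. x \<in> set p}. set p))"
    using assms by auto
  ultimately show ?thesis using finite_subset by blast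
qed

lemma ball_fin:
  assumes "\<And>x. finite {p \<in> tuples Rs Rel. x \<in> set p}" "finite X"
  shows "finite ((adjR Rs Rel ^^ n) `` X)"
proof (induction n)
  case 0 thus ?case using assms by simp
next
  case (Suc n) thus ?case using adj_img_fin[OF assms(1)] by (simp add: relcomp_Image)
qed

lemma relpow_sym: "sym R \<Longrightarrow> (x,y) \<in> R^^n \<Longrightarrow> (y,x) \<in> R^^n"
proof (induction n arbitrary: x y)
  case 0 thus ?case by simp
next
  case (Suc n)
  then obtain z where "(x,z) \<in> R^^n" "(z,y) \<in> R" by auto
  with Suc have "(z,x) \<in> R^^n" "(y,z) \<in> R" by (auto dest: symD)
  from \<open>(y,z) \<in> R\<close> \<open>(z,x) \<in> R^^n\<close> show ?case by (rule relpow_Suc_I2)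
qed


definition conn_in :: "'r set \<Rightarrow> ('r \<Rightarrow> 'a list set) \<Rightarrow> 'a \<Rightarrow> 'a set \<Rightarrow> bool" where
  "conn_in Rs Rel c S \<longleftrightarrow> (\<forall>a\<in>S. a = c \<or> (\<exists>ps. is_path Rs Rel ps c a \<and> (\<forall>p\<in>set ps. set p \<subseteq> S)))"

lemma grow:
  assumes exp: "\<And>S. finite S \<Longrightarrow> S \<subseteq> C \<Longrightarrow> c \<in> S \<Longrightarrow>
          \<exists>p\<in>tuples Rs Rel. set p \<subseteq> C \<and> set p \<inter> S \<noteq> {} \<and> \<not> set p \<subseteq> S"
    and len: "\<And>p. p \<in> tuples Rs Rel \<Longrightarrow> length p \<le> r"
    and c: "c \<in> C" and t: "t \<ge> 1" and r1: "r \<ge> 1"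
  shows "\<exists>S. finite S \<and> S \<subseteq> C \<and> c \<in> S \<and> S \<subseteq> (adjR Rs Rel ^^ n) `` {c} \<and>
             min (Suc n) t \<le> card S \<and> card S \<le> t + r - 1 \<and> conn_in Rs Rel c S"
proof (induction n)
  case 0
  show ?case using c t r1 by (intro exI[of _ "{c}"]) (auto simp: conn_in_def)
next
  case (Suc n)
  then obtain S where S: "finite S" "S \<subseteq> C" "c \<in> S" "S \<subseteq> (adjR Rs Rel ^^ n) `` {c}"
    "min (Suc n) t \<le> card S" "card S \<le> t + r - 1" "conn_in Rs Rel c S" by blast
  have Ssub: "(adjR Rs Rel ^^ n) `` {c} \<subseteq> (adjR Rs Rel ^^ Suc n) `` {c}"
    using adjR_refl by fastforce
  show ?case
  proof (cases "t \<le> card S")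
    case True
    thus ?thesis using S Ssub by (intro exI[of _ S]) auto
  next
    case False
    obtain p where p: "p \<in> tuples Rs Rel" "set p \<subseteq> C" "set p \<inter> S \<noteq> {}" "\<not> set p \<subseteq> S"
      using exp[OF S(1,2,3)] by blast
    obtain z where z: "z \<in> set p" "z \<in> S" using p(3) by blast
    define S' where "S' = S \<union> set p"
    have fin: "finite S'" using S(1) by (simp add: S'_def)
    have cardS': "card S' = card S + card (set p - S)"
      unfolding S'_def using S(1) by (metis card_Un_disjoint Diff_disjoint Un_Diff_cancel finite_Diff finite_set Int_commute)
    have c1: "card (set p - S) \<ge> 1" using p(4) by (simp add: Suc_leI card_gt_0_iff)
    have "card (set p - S) < card (set p)" using z by (intro psubset_card_mono) auto
    also have "card (set p) \<le> length p" by (rule card_length)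
    also have "\<dots> \<le> r" using len p(1) .
    finally have c2: "card (set p - S) \<le> r - 1" by linarith
    have sub: "S' \<subseteq> (adjR Rs Rel ^^ Suc n) `` {c}"
    proof
      fix y assume "y \<in> S'"
      then consider "y \<in> S" | "y \<in> set p" unfolding S'_def by blast
      thus "y \<in> (adjR Rs Rel ^^ Suc n) `` {c}"
      proof cases
        case 1 thus ?thesis using S(4) Ssub by blast
      next
        case 2
        have "(c,z) \<in> adjR Rs Rel ^^ n" using S(4) z by blast
        moreover have "(z,y) \<in> adjR Rs Rel" using p(1) z 2 unfolding adjR_def by auto
        ultimately show ?thesis by auto
      qed
    qed
    have conn: "conn_in Rs Rel c S'"
      unfolding conn_in_def
    proof
      fix a assume "a \<in> S'"
      then consider "a \<in> S" | "a \<in> set p" unfolding S'_def by blast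
      thus "a = c \<or> (\<exists>ps. is_path Rs Rel ps c a \<and> (\<forall>p\<in>set ps. set p \<subseteq> S'))"
      proof cases
        case 1 thus ?thesis using S(7) unfolding conn_in_def S'_def by blast
      next
        case 2
        have pa: "is_path Rs Rel [p] z a" using path_single p(1) z(1) 2 by metis
        show ?thesis
        proof (cases "z = c")
          case True thus ?thesis using pa by (auto simp: S'_def)
        next
          case False
          then obtain ps where ps: "is_path Rs Rel ps c z" "\<forall>q\<in>set ps. set q \<subseteq> S"
            using S(7) z(2) unfolding conn_in_def by blast
          have "is_path Rs Rel (ps @ [p]) c a" using path_app[OF ps(1) pa] .
          moreover have "\<forall>q\<in>set (ps @ [p]). set q \<subseteq> S'" using ps(2) by (auto simp: S'_def)
          ultimately show ?thesis by blast
        qed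
      qed
    qed
    show ?thesis
      using fin sub conn S p cardS' c1 c2 False
      by (intro exI[of _ S']) (auto simp: S'_def)
  qed
qed


lemma far:
  assumes exp: "\<And>S c. finite S \<Longrightarrow> S \<subseteq> C \<Longrightarrow> c \<in> S \<Longrightarrow>
          \<exists>p\<in>tuples Rs Rel. set p \<subseteq> C \<and> set p \<inter> S \<noteq> {} \<and> \<not> set p \<subseteq> S"
    and len: "\<And>p. p \<in> tuples Rs Rel \<Longrightarrow> length p \<le> r"
    and lf: "\<And>x. finite {p \<in> tuples Rs Rel. x \<in> set p}"
    and inf: "infinite C" and t: "t \<ge> 1" and F: "finite F" and r1: "r \<ge> 1"
  shows "\<exists>S c. finite S \<and> S \<subseteq> C \<and> c \<in> S \<and> t \<le> card S \<and> card S \<le> t + r - 1 \<and>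
             conn_in Rs Rel c S \<and> (\<forall>s\<in>S. \<forall>f\<in>F. (f,s) \<notin> adjR Rs Rel)"
proof -
  have fB: "finite ((adjR Rs Rel ^^ Suc t) `` F)" using ball_fin[OF lf F] .
  have "\<not> C \<subseteq> (adjR Rs Rel ^^ Suc t) `` F"
  proof
    assume "C \<subseteq> (adjR Rs Rel ^^ Suc t) `` F"
    from finite_subset[OF this fB] inf show False by simp
  qed
  then obtain c where c: "c \<in> C" "c \<notin> (adjR Rs Rel ^^ Suc t) `` F" by blast
  obtain S where S: "finite S" "S \<subseteq> C" "c \<in> S" "S \<subseteq> (adjR Rs Rel ^^ t) `` {c}"
    "min (Suc t) t \<le> card S" "card S \<le> t + r - 1" "conn_in Rs Rel c S"
  proof -
    have g: "\<exists>S. finite S \<and> S \<subseteq> C \<and> c \<in> S \<and> S \<subseteq> (adjR Rs Rel ^^ t) `` {c} \<and>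
             min (Suc t) t \<le> card S \<and> card S \<le> t + r - 1 \<and> conn_in Rs Rel c S"
      by (rule grow[where n=t]) (fact exp len c(1) t r1)+
    show ?thesis using g that by blast
  qed
  have "\<forall>s\<in>S. \<forall>f\<in>F. (f,s) \<notin> adjR Rs Rel"
  proof (intro ballI notI)
    fix s f assume s: "s \<in> S" and f: "f \<in> F" and fs: "(f,s) \<in> adjR Rs Rel"
    have "(c,s) \<in> adjR Rs Rel ^^ t" using S(4) s by blast
    hence "(s,c) \<in> adjR Rs Rel ^^ t" by (rule relpow_sym[OF adjR_sym])
    hence "(f,c) \<in> adjR Rs Rel ^^ Suc t" using fs by (rule relpow_Suc_I2[rotated])
    thus False using c(2) f by blast
  qed
  thus ?thesis using S by (intro exI[of _ S] exI[of _ c]) auto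
qed

lemma seq_exists:
  assumes "\<And>F. finite F \<Longrightarrow> \<exists>S. finite S \<and> P F S" "finite F0"
  shows "\<exists>Ss. \<forall>j::nat. finite (Ss j) \<and> P (F0 \<union> (\<Union>i<j. Ss i)) (Ss j)"
proof -
  define nxt where "nxt F = (SOME S. finite S \<and> P F S)" for F
  have nxt: "finite (nxt F) \<and> P F (nxt F)" if "finite F" for F
    unfolding nxt_def using someI_ex[OF assms(1)[OF that]] .
  define U where "U = rec_nat F0 (\<lambda>_ X. X \<union> nxt X)"
  have U: "U j = F0 \<union> (\<Union>i<j. nxt (U i)) \<and> finite (U j)" for j
  proof (induction j)
    case 0 thus ?case using assms(2) by (simp add: U_def)
  next
    case (Suc j)
    have e1: "U (Suc j) = U j \<union> nxt (U j)" by (simp add: U_def)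
    have e2: "U j = F0 \<union> (\<Union>i<j. nxt (U i))" and fU: "finite (U j)" using Suc by auto
    have "(\<Union>i<Suc j. nxt (U i)) = (\<Union>i<j. nxt (U i)) \<union> nxt (U j)"
      by (simp add: lessThan_Suc Un_commute)
    hence "U (Suc j) = F0 \<union> (\<Union>i<Suc j. nxt (U i))" using e1 e2 by (simp add: Un_assoc)
    moreover have "finite (U (Suc j))" using e1 fU nxt[OF fU] by simp
    ultimately show ?case by blast
  qed
  have "finite (nxt (U j)) \<and> P (F0 \<union> (\<Union>i<j. nxt (U i))) (nxt (U j))" for j
  proof -
    have e: "U j = F0 \<union> (\<Union>i<j. nxt (U i))" and fU: "finite (U j)" using U[of j] by auto
    show ?thesis unfolding e[symmetric] using nxt[OF fU] .
  qed
  thus ?thesis by (intro exI[of _ "\<lambda>j. nxt (U j)"] allI) simp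
qed


lemma conn_connected:
  assumes "conn_in Rs Rel c S" "c \<in> S" "S \<subseteq> A"
  shows "connected_set Rs (restrict_rel Rel A) S"
  unfolding connected_set_def
proof (intro ballI impI)
  fix a b assume a: "a \<in> S" and b: "b \<in> S" and ab: "a \<noteq> b"
  have "\<exists>ps. is_path Rs Rel ps a b \<and> (\<forall>p\<in>set ps. set p \<subseteq> S)"
  proof (cases "a = c")
    case True
    hence bc: "b \<noteq> c" using ab by simp
    have "b = c \<or> (\<exists>ps. is_path Rs Rel ps c b \<and> (\<forall>p\<in>set ps. set p \<subseteq> S))"
      using assms(1) b unfolding conn_in_def by blast
    thus ?thesis using bc True by simp
  next
    case ac: False
    then obtain ps where ps: "is_path Rs Rel ps c a" "\<forall>p\<in>set ps. set p \<subseteq> S"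
      using assms(1) a unfolding conn_in_def by blast
    show ?thesis
    proof (cases "b = c")
      case True thus ?thesis using path_rev[OF ps(1)] ps(2) by (intro exI[of _ "rev ps"]) auto
    next
      case False
      then obtain qs where qs: "is_path Rs Rel qs c b" "\<forall>p\<in>set qs. set p \<subseteq> S"
        using assms(1) b unfolding conn_in_def by blast
      have "is_path Rs Rel (rev ps @ qs) a b" using path_app[OF path_rev[OF ps(1)] qs(1)] .
      thus ?thesis using ps(2) qs(2) by (intro exI[of _ "rev ps @ qs"]) auto
    qed
  qed
  then obtain ps where "is_path Rs Rel ps a b" "\<forall>p\<in>set ps. set p \<subseteq> S" by blast
  thus "\<exists>ps. is_path Rs (restrict_rel Rel A) ps a b \<and> (\<forall>p\<in>set ps. set p \<subseteq> S)"
    using path_restrict[of Rs Rel ps a b A] assms(3) by blast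
qed

theorem mainTheorem10:
  fixes M :: "'a set" and Rs :: "'r set" and ar :: "'r \<Rightarrow> nat"
    and Rel :: "'r \<Rightarrow> 'a list set" and Cs :: "'c set" and cst :: "'c \<Rightarrow> 'a"
    and k t r :: nat
  assumes "k \<ge> 1" and "t \<ge> 1"
    and "finite Rs" and "finite Cs" and "Rs \<noteq> {}"
    and "r = Max (ar ` Rs)" and "r \<ge> 2"
    and "is_structure M Rs ar Rel Cs cst"
    and "totally_bounded k M Rs ar Rel"
    and "\<exists>C. component M Rs Rel C \<and> infinite C"
  shows "\<exists>t' A. t \<le> t' \<and> t' \<le> t * r \<and> A \<subseteq> M \<and> cst ` Cs \<subseteq> A \<and>
           infinite {C. component A Rs (restrict_rel Rel A) C \<and> card C = t'}"
proof -
  note st = assms(8)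
  obtain C0 where C0: "component M Rs Rel C0" "infinite C0" using assms(10) by blast
  have len: "length p \<le> r" if pT: "p \<in> tuples Rs Rel" for p
  proof -
    obtain R where R: "R \<in> Rs" "p \<in> Rel R" using pT unfolding tuples_def by blast
    hence "length p = ar R" using st unfolding is_structure_def by blast
    also have "\<dots> \<le> r" using R(1) assms(3,6) by simp
    finally show ?thesis .
  qed
  have lf: "finite {p \<in> tuples Rs Rel. x \<in> set p}" for x
    using loc_fin[OF st assms(9,3)] .
  have exp: "\<exists>p\<in>tuples Rs Rel. set p \<subseteq> C0 \<and> set p \<inter> S \<noteq> {} \<and> \<not> set p \<subseteq> S"
    if fS: "finite S" "S \<subseteq> C0" "c \<in> S" for S c
  proof -
    have "\<not> C0 \<subseteq> S"
    proof
      assume "C0 \<subseteq> S"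
      from finite_subset[OF this fS(1)] C0(2) show False by simp
    qed
    then obtain b where b: "b \<in> C0" "b \<notin> S" by blast
    have "c \<in> C0" "c \<noteq> b" using fS b by auto
    have cs: "connected_set Rs Rel C0" using C0(1) unfolding component_def by (elim conjE)
    obtain ps where ps: "is_path Rs Rel ps c b" "\<forall>p\<in>set ps. set p \<subseteq> C0"
      using cs[unfolded connected_set_def, rule_format, OF \<open>c \<in> C0\<close> b(1) \<open>c \<noteq> b\<close>] by (elim exE conjE)
    obtain p where p: "p \<in> set ps" "set p \<inter> S \<noteq> {}" "\<not> set p \<subseteq> S"
      using path_exit[OF ps(1) fS(3) b(2)] by blast
    have "p \<in> tuples Rs Rel" using ps(1) p(1) unfolding is_path_def by blast
    thus ?thesis using p ps(2) by blast
  qed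
  define P where "P F S \<longleftrightarrow> (\<exists>c. S \<subseteq> C0 \<and> c \<in> S \<and> t \<le> card S \<and> card S \<le> t + r - 1 \<and>
             conn_in Rs Rel c S \<and> (\<forall>s\<in>S. \<forall>f\<in>F. (f,s) \<notin> adjR Rs Rel))" for F S
  have "\<exists>S. finite S \<and> P F S" if fF: "finite F" for F
  proof -
    have r1: "r \<ge> 1" using assms(7) by simp
    obtain S c where Sc: "finite S" "S \<subseteq> C0" "c \<in> S" "t \<le> card S" "card S \<le> t + r - 1"
      "conn_in Rs Rel c S" "\<forall>s\<in>S. \<forall>f\<in>F. (f,s) \<notin> adjR Rs Rel"
    proof -
      have "\<exists>S c. finite S \<and> S \<subseteq> C0 \<and> c \<in> S \<and> t \<le> card S \<and> card S \<le> t + r - 1 \<and>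
             conn_in Rs Rel c S \<and> (\<forall>s\<in>S. \<forall>f\<in>F. (f,s) \<notin> adjR Rs Rel)"
      proof (rule far[where C=C0 and Rs=Rs and Rel=Rel and r=r and t=t and F=F])
        show "\<And>S c. finite S \<Longrightarrow> S \<subseteq> C0 \<Longrightarrow> c \<in> S \<Longrightarrow>
          \<exists>p\<in>tuples Rs Rel. set p \<subseteq> C0 \<and> set p \<inter> S \<noteq> {} \<and> \<not> set p \<subseteq> S" by (rule exp)
        show "\<And>p. p \<in> tuples Rs Rel \<Longrightarrow> length p \<le> r" by (rule len)
        show "\<And>x. finite {p \<in> tuples Rs Rel. x \<in> set p}" by (rule lf)
      qed (use C0(2) assms(2) fF r1 in auto)
      thus ?thesis using that by blast
    qed
    have "P F S" unfolding P_def by (rule exI[of _ c]) (intro conjI Sc(2-7))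
    thus ?thesis using Sc(1) by blast
  qed
  hence "\<exists>Ss. \<forall>j::nat. finite (Ss j) \<and> P (cst ` Cs \<union> (\<Union>i<j. Ss i)) (Ss j)"
    using finite_imageI[OF assms(4)] by (rule seq_exists)
  then obtain Ss where Ss0: "\<forall>j::nat. finite (Ss j) \<and> P (cst ` Cs \<union> (\<Union>i<j. Ss i)) (Ss j)"
    by (elim exE)
  have Ss: "finite (Ss j) \<and> P (cst ` Cs \<union> (\<Union>i<j. Ss i)) (Ss j)" for j using Ss0 by (rule spec)
  define A where "A = cst ` Cs \<union> (\<Union>j. Ss j)"
  have C0M: "C0 \<subseteq> M" using C0(1) unfolding component_def by blast
  have Pj: "\<exists>c. Ss j \<subseteq> C0 \<and> c \<in> Ss j \<and> t \<le> card (Ss j) \<and> card (Ss j) \<le> t + r - 1 \<and>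
             conn_in Rs Rel c (Ss j) \<and> (\<forall>s\<in>Ss j. \<forall>f\<in>cst ` Cs \<union> (\<Union>i<j. Ss i). (f,s) \<notin> adjR Rs Rel)" for j
  proof -
    have "P (cst ` Cs \<union> (\<Union>i<j. Ss i)) (Ss j)" using Ss[of j] by (rule conjunct2)
    thus ?thesis unfolding P_def .
  qed
  have SC: "Ss j \<subseteq> C0" for j using Pj[of j] by (elim exE conjE)
  have cM: "cst ` Cs \<subseteq> M" using st by (simp add: is_structure_def)
  have AM: "A \<subseteq> M" unfolding A_def using SC C0M cM by blast
  have sep: "(f,s) \<notin> adjR Rs Rel" if "s \<in> Ss j" "f \<in> cst ` Cs \<union> (\<Union>i<j. Ss i)" for s f j
  proof -
    have "\<forall>s\<in>Ss j. \<forall>f\<in>cst ` Cs \<union> (\<Union>i<j. Ss i). (f,s) \<notin> adjR Rs Rel" using Pj[of j] by (elim exE conjE)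
    thus ?thesis using that by blast
  qed
  have disj: "Ss i \<inter> Ss j = {}" if ij: "i < j" for i j
  proof (rule ccontr)
    assume "Ss i \<inter> Ss j \<noteq> {}"
    then obtain s where s: "s \<in> Ss i" "s \<in> Ss j" by blast
    have "s \<in> cst ` Cs \<union> (\<Union>i<j. Ss i)" using s(1) ij by blast
    from sep[OF s(2) this] adjR_refl[of s Rs Rel] show False by simp
  qed
  have ne: "Ss j \<noteq> {}" for j
  proof -
    obtain c where "c \<in> Ss j" using Pj[of j] by (elim exE conjE)
    thus ?thesis by blast
  qed
  have injS: "inj Ss"
  proof (rule injI)
    fix i j
    assume eq: "Ss i = Ss j"
    show "i = j"
    proof (rule ccontr)
      assume "i \<noteq> j"
      hence "i < j \<or> j < i" by arith
      then consider "i < j" | "j < i" by blast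
      hence "Ss i \<inter> Ss j = {}"
      proof cases
        case 1 thus ?thesis by (rule disj)
      next
        case 2 thus ?thesis using disj[of j i] by (simp add: Int_commute)
      qed
      thus False using eq ne[of j] by simp
    qed
  qed
  have comp: "component A Rs (restrict_rel Rel A) (Ss j)" for j
  proof -
    obtain c where c: "Ss j \<subseteq> C0" "c \<in> Ss j" "conn_in Rs Rel c (Ss j)"
      using Pj[of j] by (elim exE conjE)
    have SA: "Ss j \<subseteq> A" unfolding A_def by blast
    have cl: "\<forall>p\<in>tuples Rs (restrict_rel Rel A). set p \<inter> Ss j \<noteq> {} \<longrightarrow> set p \<subseteq> Ss j"
    proof (intro ballI impI subsetI)
      fix p y assume p: "p \<in> tuples Rs (restrict_rel Rel A)" and m: "set p \<inter> Ss j \<noteq> {}"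
        and y: "y \<in> set p"
      obtain x where x: "x \<in> set p" "x \<in> Ss j" using m by blast
      have pT: "p \<in> tuples Rs Rel" "set p \<subseteq> A" using p by (auto simp: tuples_restrict)
      have xy: "(x,y) \<in> adjR Rs Rel" "(y,x) \<in> adjR Rs Rel" using pT x y unfolding adjR_def by auto
      have "y \<in> A" using pT y by blast
      then consider "y \<in> cst ` Cs" | i where "y \<in> Ss i" unfolding A_def by blast
      thus "y \<in> Ss j"
      proof cases
        case 1 thus ?thesis using sep[of x j y] x xy by blast
      next
        case (2 i)
        consider "i < j" | "i = j" | "j < i" by linarith
        thus ?thesis
        proof cases
          case 1 thus ?thesis using sep[of x j y] x xy 2 by blast
        next
          case 2 thus ?thesis using \<open>y \<in> Ss i\<close> by simp
        next
          case 3 thus ?thesis using sep[of y i x] x xy 2 by blast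
        qed
      qed
    qed
    show ?thesis unfolding component_def
    proof (intro conjI ballI allI impI)
      show "Ss j \<noteq> {}" by (rule ne)
      show "Ss j \<subseteq> A" by (rule SA)
      show "connected_set Rs (restrict_rel Rel A) (Ss j)" by (rule conn_connected[OF c(3) c(2) SA])
      fix a b ps assume ha: "a \<in> Ss j" and hp: "is_path Rs (restrict_rel Rel A) ps a b"
      show "b \<in> Ss j" by (rule path_closed[OF hp ha cl])
    qed
  qed
  have cards: "card (Ss j) \<in> {t..t + r - 1}" for j
  proof -
    obtain c where "Ss j \<subseteq> C0 \<and> c \<in> Ss j \<and> t \<le> card (Ss j) \<and> card (Ss j) \<le> t + r - 1 \<and>
             conn_in Rs Rel c (Ss j) \<and> (\<forall>s\<in>Ss j. \<forall>f\<in>cst ` Cs \<union> (\<Union>i<j. Ss i). (f,s) \<notin> adjR Rs Rel)"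
      using Pj[of j] by (rule exE)
    hence "t \<le> card (Ss j)" "card (Ss j) \<le> t + r - 1" by simp_all
    thus ?thesis by simp
  qed
  have "(card \<circ> Ss) ` UNIV \<subseteq> {t..t + r - 1}" using cards by auto
  hence "finite ((card \<circ> Ss) ` UNIV)" using finite_atLeastAtMost by (rule finite_subset)
  from pigeonhole_infinite[OF infinite_UNIV_nat this]
  obtain j0 where j0: "infinite {j \<in> UNIV. (card \<circ> Ss) j = (card \<circ> Ss) j0}"
    by (elim bexE)
  define t' where "t' = card (Ss j0)"
  have sub: "Ss ` {j. card (Ss j) = t'} \<subseteq> {C. component A Rs (restrict_rel Rel A) C \<and> card C = t'}"
    using comp by auto
  have j0': "infinite {j. card (Ss j) = t'}" using j0 unfolding t'_def by simp
  have injo: "inj_on Ss {j. card (Ss j) = t'}" using inj_on_subset[OF injS subset_UNIV] .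
  have "infinite (Ss ` {j. card (Ss j) = t'})"
  proof
    assume "finite (Ss ` {j. card (Ss j) = t'})"
    from finite_imageD[OF this injo] j0' show False by simp
  qed
  have inf: "infinite {C. component A Rs (restrict_rel Rel A) C \<and> card C = t'}"
  proof
    assume "finite {C. component A Rs (restrict_rel Rel A) C \<and> card C = t'}"
    from finite_subset[OF sub this] \<open>infinite (Ss ` {j. card (Ss j) = t'})\<close> show False by simp
  qed
  have "t \<le> t'" "t' \<le> t + r - 1" using cards[of j0] unfolding t'_def by auto
  moreover have "t + r - 1 \<le> t * r"
  proof -
    have e: "t * r = t + t * (r - 1)" using assms(7) by (cases r) auto
    have "r - 1 \<le> t * (r - 1)" using assms(2) by simp
    thus ?thesis using e by linarith
  qed
  ultimately have tt: "t \<le> t'" "t' \<le> t * r" by auto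
  have cA: "cst ` Cs \<subseteq> A" unfolding A_def by (rule Un_upper1)
  show ?thesis
    apply (rule exI[of _ t'])
    apply (rule exI[of _ A])
    using tt AM cA inf by (intro conjI)
qed

end
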